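(* Let $\Omega\subseteq\mathbb{R}^n$ be open and let $\mathbb{H}_{nf}(\Omega)$ be the set of all nearly finite H-continuous interval functions on $\Omega$, ordered by $\le$. Then $\mathbb{H}_{nf}(\Omega)$ is Dedekind order complete: (a) if $\mathcal{F}$ is a nonempty subset of $\mathbb{H}_{nf}(\Omega)$ which is bounded from above in $\mathbb{H}_{nf}(\Omega)$, then there exists $u\in\mathbb{H}_{nf}(\Omega)$ with $u=\sup\mathcal{F}$; (b) if $\mathcal{F}$ is a nonempty subset of $\mathbb{H}_{nf}(\Omega)$ which is bounded from below in $\mathbb{H}_{nf}(\Omega)$, then there exists $v\in\mathbb{H}_{nf}(\Omega)$ with $v=\inf\mathcal{F}$.
   Context: $\overline{\mathbb{R}}=\mathbb{R}\cup\{\pm\infty\}$, $\mathbb{I}\overline{\mathbb{R}}$ is the set of closed intervals $[\underline a,\overline a]$ with $\underline a\le\overline a$ in $\overline{\mathbb{R}}$, $a\in\overline{\mathbb{R}}$ identified with $[a,a]$. $\mathbb{A}(\Omega)$ is the set of functions $\Omega\to\mathbb{I}\overline{\mathbb{R}}$. Order: $[\underline a,\overline a]\le[\underline b,\overline b]$ iff $\underline a\le\underline b$ and $\overline a\le\overline b$; $f\le g$ iff $f(x)\le g(x)$ for all $x\in\Omega$. $f$ is nearly finite if there is an open dense subset $D$ of $\Omega$ such that $f(x)$ has both endpoints real for all $x\in D$. $B_\delta(x)=\{y\in\Omega:\|x-y\|<\delta\}$. For $f\in\mathbb{A}(\Omega)$: $I(f)(x)=\sup_{\delta>0}\inf\{z\in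 f(y):y\in B_\delta(x)\}$, $S(f)(x)=\inf_{\delta>0}\sup\{z\in f(y):y\in B_\delta(x)\}$, $F(f)(x)=[I(f)(x),S(f)(x)]$. $f$ is H-continuous if for every $g\in\mathbb{A}(\Omega)$ with $g(x)\subseteq f(x)$ for all $x$ one has $F(g)=f$. *)

theory Defs
  imports "HOL-Analysis.Analysis"
begin

text \<open>An interval of extended reals [a, b] with a \<le> b is represented by the pair (a, b).
  An interval function on Omega is a map f :: 'a \<Rightarrow> ereal \<times> ereal with
  fst (f x) \<le> snd (f x) for every x in Omega; values outside Omega are irrelevant.\<close>

definition interval_fun :: "'a set \<Rightarrow> ('a \<Rightarrow> ereal \<times> ereal) \<Rightarrow> bool" where
  "interval_fun \<Omega> f \<longleftrightarrow> (\<forall>x\<in>\<Omega>. fst (f x) \<le> snd (f x))"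

definition in_ivl :: "ereal \<Rightarrow> ereal \<times> ereal \<Rightarrow> bool" where
  "in_ivl z a \<longleftrightarrow> fst a \<le> z \<and> z \<le> snd a"

definition ivl_subset :: "ereal \<times> ereal \<Rightarrow> ereal \<times> ereal \<Rightarrow> bool" where
  "ivl_subset a b \<longleftrightarrow> fst b \<le> fst a \<and> snd a \<le> snd b"

definition ivl_le :: "ereal \<times> ereal \<Rightarrow> ereal \<times> ereal \<Rightarrow> bool" where
  "ivl_le a b \<longleftrightarrow> fst a \<le> fst b \<and> snd a \<le> snd b"

definition fun_le :: "'a set \<Rightarrow> ('a \<Rightarrow> ereal \<times> ereal) \<Rightarrow> ('a \<Rightarrow> ereal \<times> ereal) \<Rightarrow> bool" where
  "fun_le \<Omega> f g \<longleftrightarrow> (\<forall>x\<in>\<Omega>. ivl_le (f x) (g x))"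

definition Bd :: "'a set \<Rightarrow> real \<Rightarrow> 'a::real_normed_vector \<Rightarrow> 'a set" where
  "Bd \<Omega> \<delta> x = {y\<in>\<Omega>. norm (x - y) < \<delta>}"

definition lowerB :: "'a set \<Rightarrow> ('a::real_normed_vector \<Rightarrow> ereal \<times> ereal) \<Rightarrow> 'a \<Rightarrow> ereal" where
  "lowerB \<Omega> f x = (SUP \<delta>\<in>{0<..}. Inf {z. \<exists>y\<in>Bd \<Omega> \<delta> x. in_ivl z (f y)})"

definition upperB :: "'a set \<Rightarrow> ('a::real_normed_vector \<Rightarrow> ereal \<times> ereal) \<Rightarrow> 'a \<Rightarrow> ereal" where
  "upperB \<Omega> f x = (INF \<delta>\<in>{0<..}. Sup {z. \<exists>y\<in>Bd \<Omega> \<delta> x. in_ivl z (f y)})"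

definition Fop :: "'a set \<Rightarrow> ('a::real_normed_vector \<Rightarrow> ereal \<times> ereal) \<Rightarrow> 'a \<Rightarrow> ereal \<times> ereal" where
  "Fop \<Omega> f x = (lowerB \<Omega> f x, upperB \<Omega> f x)"

definition H_continuous :: "'a set \<Rightarrow> ('a::real_normed_vector \<Rightarrow> ereal \<times> ereal) \<Rightarrow> bool" where
  "H_continuous \<Omega> f \<longleftrightarrow>
     (\<forall>g. interval_fun \<Omega> g \<and> (\<forall>x\<in>\<Omega>. ivl_subset (g x) (f x))
          \<longrightarrow> (\<forall>x\<in>\<Omega>. Fop \<Omega> g x = f x))"

definition nearly_finite :: "'a set \<Rightarrow> ('a::topological_space \<Rightarrow> ereal \<times> ereal) \<Rightarrow> bool" where
  "nearly_finite \<Omega> f \<longleftrightarrow>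
     (\<exists>D. open D \<and> D \<subseteq> \<Omega> \<and> \<Omega> \<subseteq> closure D \<and>
          (\<forall>x\<in>D. \<bar>fst (f x)\<bar> \<noteq> \<infinity> \<and> \<bar>snd (f x)\<bar> \<noteq> \<infinity>))"

definition Hnf :: "'a::real_normed_vector set \<Rightarrow> ('a \<Rightarrow> ereal \<times> ereal) set" where
  "Hnf \<Omega> = {f. interval_fun \<Omega> f \<and> H_continuous \<Omega> f \<and> nearly_finite \<Omega> f}"

definition is_sup_in :: "'a set \<Rightarrow> ('a \<Rightarrow> ereal \<times> ereal) set \<Rightarrow> ('a \<Rightarrow> ereal \<times> ereal) set \<Rightarrow> ('a \<Rightarrow> ereal \<times> ereal) \<Rightarrow> bool" where
  "is_sup_in \<Omega> H \<F> u \<longleftrightarrow> u \<in> H \<and> (\<forall>f\<in>\<F>. fun_le \<Omega> f u) \<and>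
     (\<forall>w\<in>H. (\<forall>f\<in>\<F>. fun_le \<Omega> f w) \<longrightarrow> fun_le \<Omega> u w)"

definition is_inf_in :: "'a set \<Rightarrow> ('a \<Rightarrow> ereal \<times> ereal) set \<Rightarrow> ('a \<Rightarrow> ereal \<times> ereal) set \<Rightarrow> ('a \<Rightarrow> ereal \<times> ereal) \<Rightarrow> bool" where
  "is_inf_in \<Omega> H \<F> v \<longleftrightarrow> v \<in> H \<and> (\<forall>f\<in>\<F>. fun_le \<Omega> v f) \<and>
     (\<forall>w\<in>H. (\<forall>f\<in>\<F>. fun_le \<Omega> w f) \<longrightarrow> fun_le \<Omega> w v)"

end

theory Submission
  imports Defs
begin

definition Il :: "'a set \<Rightarrow> ('a::real_normed_vector \<Rightarrow> ereal) \<Rightarrow> 'a \<Rightarrow> ereal" where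
  "Il \<Omega> p x = (SUP \<delta>\<in>{0<..}. INF y\<in>Bd \<Omega> \<delta> x. p y)"

definition Su :: "'a set \<Rightarrow> ('a::real_normed_vector \<Rightarrow> ereal) \<Rightarrow> 'a \<Rightarrow> ereal" where
  "Su \<Omega> p x = (INF \<delta>\<in>{0<..}. SUP y\<in>Bd \<Omega> \<delta> x. p y)"

lemma Bd_sub: "y \<in> Bd \<Omega> \<delta> x \<Longrightarrow> y \<in> \<Omega>"
  by (simp add: Bd_def)

lemma Bd_self: "x \<in> \<Omega> \<Longrightarrow> 0 < \<delta> \<Longrightarrow> x \<in> Bd \<Omega> \<delta> x"
  by (simp add: Bd_def)

lemma Bd_half: "y \<in> Bd \<Omega> (\<delta>/2) x \<Longrightarrow> Bd \<Omega> (\<delta>/2) y \<subseteq> Bd \<Omega> \<delta> x"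
proof
  fix z assume y: "y \<in> Bd \<Omega> (\<delta>/2) x" and z: "z \<in> Bd \<Omega> (\<delta>/2) y"
  have "norm (x - z) \<le> norm (x - y) + norm (y - z)"
    using norm_triangle_ineq[of "x - y" "y - z"] by simp
  with y z show "z \<in> Bd \<Omega> \<delta> x" by (auto simp: Bd_def)
qed

lemma lowerB_eq:
  assumes "interval_fun \<Omega> f"
  shows "lowerB \<Omega> f x = Il \<Omega> (\<lambda>y. fst (f y)) x"
proof -
  have "Inf {z. \<exists>y\<in>Bd \<Omega> \<delta> x. in_ivl z (f y)} = (INF y\<in>Bd \<Omega> \<delta> x. fst (f y))" for \<delta>
  proof (rule antisym)
    show "Inf {z. \<exists>y\<in>Bd \<Omega> \<delta> x. in_ivl z (f y)} \<le> (INF y\<in>Bd \<Omega> \<delta> x. fst (f y))"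
      apply (rule INF_greatest, rule Inf_lower)
      using assms by (auto simp: in_ivl_def interval_fun_def dest: Bd_sub)
    show "(INF y\<in>Bd \<Omega> \<delta> x. fst (f y)) \<le> Inf {z. \<exists>y\<in>Bd \<Omega> \<delta> x. in_ivl z (f y)}"
      apply (rule Inf_greatest)
      by (auto simp: in_ivl_def intro: INF_lower2)
  qed
  then show ?thesis by (simp add: lowerB_def Il_def)
qed

lemma upperB_eq:
  assumes "interval_fun \<Omega> f"
  shows "upperB \<Omega> f x = Su \<Omega> (\<lambda>y. snd (f y)) x"
proof -
  have "Sup {z. \<exists>y\<in>Bd \<Omega> \<delta> x. in_ivl z (f y)} = (SUP y\<in>Bd \<Omega> \<delta> x. snd (f y))" for \<delta>
  proof (rule antisym)
    show "(SUP y\<in>Bd \<Omega> \<delta> x. snd (f y)) \<le> Sup {z. \<exists>y\<in>Bd \<Omega> \<delta> x. in_ivl z (f y)}"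
      apply (rule SUP_least, rule Sup_upper)
      using assms by (auto simp: in_ivl_def interval_fun_def dest: Bd_sub)
    show "Sup {z. \<exists>y\<in>Bd \<Omega> \<delta> x. in_ivl z (f y)} \<le> (SUP y\<in>Bd \<Omega> \<delta> x. snd (f y))"
      apply (rule Sup_least)
      by (auto simp: in_ivl_def intro: SUP_upper2)
  qed
  then show ?thesis by (simp add: upperB_def Su_def)
qed

lemma Il_mono: "(\<And>y. y \<in> \<Omega> \<Longrightarrow> p y \<le> q y) \<Longrightarrow> Il \<Omega> p x \<le> Il \<Omega> q x"
  unfolding Il_def by (rule SUP_mono', rule INF_mono) (auto dest: Bd_sub)

lemma Su_mono: "(\<And>y. y \<in> \<Omega> \<Longrightarrow> p y \<le> q y) \<Longrightarrow> Su \<Omega> p x \<le> Su \<Omega> q x"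
  unfolding Su_def by (rule INF_mono', rule SUP_mono) (auto dest: Bd_sub)

lemma Il_cong: "(\<And>y. y \<in> \<Omega> \<Longrightarrow> p y = q y) \<Longrightarrow> Il \<Omega> p x = Il \<Omega> q x"
  by (intro antisym Il_mono) auto

lemma Su_cong: "(\<And>y. y \<in> \<Omega> \<Longrightarrow> p y = q y) \<Longrightarrow> Su \<Omega> p x = Su \<Omega> q x"
  by (intro antisym Su_mono) auto

lemma Il_le: "x \<in> \<Omega> \<Longrightarrow> Il \<Omega> p x \<le> p x"
  unfolding Il_def by (rule SUP_least, rule INF_lower2[OF Bd_self]) auto

lemma Su_ge: "x \<in> \<Omega> \<Longrightarrow> p x \<le> Su \<Omega> p x"
  unfolding Su_def by (rule INF_greatest, rule SUP_upper2[OF Bd_self]) auto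

lemma Il_Il_ge: "Il \<Omega> p x \<le> Il \<Omega> (Il \<Omega> p) x"
  unfolding Il_def[of _ p x]
proof (rule SUP_least)
  fix \<delta> :: real assume d: "\<delta> \<in> {0<..}"
  have "(INF y\<in>Bd \<Omega> \<delta> x. p y) \<le> (INF y\<in>Bd \<Omega> (\<delta>/2) x. Il \<Omega> p y)"
  proof (rule INF_greatest)
    fix y assume y: "y \<in> Bd \<Omega> (\<delta>/2) x"
    have "(INF y\<in>Bd \<Omega> \<delta> x. p y) \<le> (INF z\<in>Bd \<Omega> (\<delta>/2) y. p z)"
      by (rule INF_superset_mono[OF Bd_half[OF y]]) auto
    also have "\<dots> \<le> Il \<Omega> p y" unfolding Il_def
      by (rule SUP_upper) (use d in auto)
    finally show "(INF y\<in>Bd \<Omega> \<delta> x. p y) \<le> Il \<Omega> p y" .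
  qed
  also have "\<dots> \<le> Il \<Omega> (Il \<Omega> p) x" unfolding Il_def[of _ "Il \<Omega> p"]
    by (rule SUP_upper) (use d in auto)
  finally show "(INF y\<in>Bd \<Omega> \<delta> x. p y) \<le> Il \<Omega> (Il \<Omega> p) x" .
qed

lemma Su_Su_le: "Su \<Omega> (Su \<Omega> p) x \<le> Su \<Omega> p x"
  unfolding Su_def[of _ p x]
proof (rule INF_greatest)
  fix \<delta> :: real assume d: "\<delta> \<in> {0<..}"
  have "Su \<Omega> (Su \<Omega> p) x \<le> (SUP y\<in>Bd \<Omega> (\<delta>/2) x. Su \<Omega> p y)" unfolding Su_def[of _ "Su \<Omega> p"]
    by (rule INF_lower) (use d in auto)
  also have "(SUP y\<in>Bd \<Omega> (\<delta>/2) x. Su \<Omega> p y) \<le> (SUP y\<in>Bd \<Omega> \<delta> x. p y)"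
  proof (rule SUP_least)
    fix y assume y: "y \<in> Bd \<Omega> (\<delta>/2) x"
    have "Su \<Omega> p y \<le> (SUP z\<in>Bd \<Omega> (\<delta>/2) y. p z)" unfolding Su_def
      by (rule INF_lower) (use d in auto)
    also have "\<dots> \<le> (SUP y\<in>Bd \<Omega> \<delta> x. p y)"
      by (rule SUP_subset_mono[OF Bd_half[OF y]]) auto
    finally show "Su \<Omega> p y \<le> (SUP y\<in>Bd \<Omega> \<delta> x. p y)" .
  qed
  finally show "Su \<Omega> (Su \<Omega> p) x \<le> (SUP y\<in>Bd \<Omega> \<delta> x. p y)" .
qed

lemma Il_idem: "x \<in> \<Omega> \<Longrightarrow> Il \<Omega> (Il \<Omega> p) x = Il \<Omega> p x"
  by (intro antisym Il_Il_ge Il_le)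

lemma Su_idem: "x \<in> \<Omega> \<Longrightarrow> Su \<Omega> (Su \<Omega> p) x = Su \<Omega> p x"
  by (intro antisym Su_Su_le Su_ge)

lemma ISIS: "Il \<Omega> (Su \<Omega> (Il \<Omega> (Su \<Omega> p))) x = Il \<Omega> (Su \<Omega> p) x"
proof (rule antisym)
  have "Il \<Omega> (Su \<Omega> (Il \<Omega> (Su \<Omega> p))) x \<le> Il \<Omega> (Su \<Omega> (Su \<Omega> p)) x"
    by (intro Il_mono Su_mono Il_le)
  also have "\<dots> = Il \<Omega> (Su \<Omega> p) x" by (intro Il_cong Su_idem)
  finally show "Il \<Omega> (Su \<Omega> (Il \<Omega> (Su \<Omega> p))) x \<le> Il \<Omega> (Su \<Omega> p) x" .
  have "Il \<Omega> (Su \<Omega> p) x \<le> Il \<Omega> (Il \<Omega> (Su \<Omega> p)) x" by (rule Il_Il_ge)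
  also have "\<dots> \<le> Il \<Omega> (Su \<Omega> (Il \<Omega> (Su \<Omega> p))) x"
    by (intro Il_mono Su_ge)
  finally show "Il \<Omega> (Su \<Omega> p) x \<le> Il \<Omega> (Su \<Omega> (Il \<Omega> (Su \<Omega> p))) x" .
qed

lemma SISI: "Su \<Omega> (Il \<Omega> (Su \<Omega> (Il \<Omega> p))) x = Su \<Omega> (Il \<Omega> p) x"
proof (rule antisym)
  have "Su \<Omega> (Il \<Omega> p) x = Su \<Omega> (Il \<Omega> (Il \<Omega> p)) x" by (intro Su_cong Il_idem[symmetric])
  also have "\<dots> \<le> Su \<Omega> (Il \<Omega> (Su \<Omega> (Il \<Omega> p))) x"
    by (intro Il_mono Su_mono Su_ge)
  finally show "Su \<Omega> (Il \<Omega> p) x \<le> Su \<Omega> (Il \<Omega> (Su \<Omega> (Il \<Omega> p))) x" .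
  have "Su \<Omega> (Il \<Omega> (Su \<Omega> (Il \<Omega> p))) x \<le> Su \<Omega> (Su \<Omega> (Il \<Omega> p)) x"
    by (intro Su_mono Il_le)
  also have "\<dots> \<le> Su \<Omega> (Il \<Omega> p) x" by (rule Su_Su_le)
  finally show "Su \<Omega> (Il \<Omega> (Su \<Omega> (Il \<Omega> p))) x \<le> Su \<Omega> (Il \<Omega> p) x" .
qed


lemma Hc_facts:
  assumes fi: "interval_fun \<Omega> f" and hc: "H_continuous \<Omega> f" and x: "x \<in> \<Omega>"
  shows "Il \<Omega> (\<lambda>y. fst (f y)) x = fst (f x)" "Su \<Omega> (\<lambda>y. fst (f y)) x = snd (f x)"
        "Il \<Omega> (\<lambda>y. snd (f y)) x = fst (f x)" "Su \<Omega> (\<lambda>y. snd (f y)) x = snd (f x)"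
proof -
  let ?g1 = "\<lambda>y. (fst (f y), fst (f y))" and ?g2 = "\<lambda>y. (snd (f y), snd (f y))"
  have i1: "interval_fun \<Omega> ?g1" and i2: "interval_fun \<Omega> ?g2" by (auto simp: interval_fun_def)
  have "\<forall>x\<in>\<Omega>. ivl_subset (?g1 x) (f x)" "\<forall>x\<in>\<Omega>. ivl_subset (?g2 x) (f x)"
    using fi by (auto simp: ivl_subset_def interval_fun_def)
  with hc i1 i2 x have e1: "Fop \<Omega> ?g1 x = f x" and e2: "Fop \<Omega> ?g2 x = f x"
    unfolding H_continuous_def by blast+
  from e1 show "Il \<Omega> (\<lambda>y. fst (f y)) x = fst (f x)" "Su \<Omega> (\<lambda>y. fst (f y)) x = snd (f x)"
    by (auto simp: Fop_def lowerB_eq[OF i1] upperB_eq[OF i1] prod_eq_iff)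
  from e2 show "Il \<Omega> (\<lambda>y. snd (f y)) x = fst (f x)" "Su \<Omega> (\<lambda>y. snd (f y)) x = snd (f x)"
    by (auto simp: Fop_def lowerB_eq[OF i2] upperB_eq[OF i2] prod_eq_iff)
qed

lemma H_cont_of1:
  assumes h: "\<And>x. x \<in> \<Omega> \<Longrightarrow> Il \<Omega> (Su \<Omega> h) x = h x"
  shows "interval_fun \<Omega> (\<lambda>x. (h x, Su \<Omega> h x))" "H_continuous \<Omega> (\<lambda>x. (h x, Su \<Omega> h x))"
proof -
  show "interval_fun \<Omega> (\<lambda>x. (h x, Su \<Omega> h x))" by (auto simp: interval_fun_def Su_ge)
  have Ih: "Il \<Omega> h x = h x" if "x \<in> \<Omega>" for x
  proof -
    have "Il \<Omega> h x = Il \<Omega> (Il \<Omega> (Su \<Omega> h)) x" by (rule Il_cong) (simp add: h)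
    also have "\<dots> = h x" using that by (simp add: Il_idem h)
    finally show ?thesis .
  qed
  show "H_continuous \<Omega> (\<lambda>x. (h x, Su \<Omega> h x))" unfolding H_continuous_def
  proof (intro allI impI ballI)
    fix g x assume g: "interval_fun \<Omega> g \<and> (\<forall>x\<in>\<Omega>. ivl_subset (g x) (h x, Su \<Omega> h x))"
      and x: "x \<in> \<Omega>"
    hence gi: "interval_fun \<Omega> g" and lo: "\<And>y. y \<in> \<Omega> \<Longrightarrow> h y \<le> fst (g y)"
      and hi: "\<And>y. y \<in> \<Omega> \<Longrightarrow> snd (g y) \<le> Su \<Omega> h y"
      and gg: "\<And>y. y \<in> \<Omega> \<Longrightarrow> fst (g y) \<le> snd (g y)"
      by (auto simp: ivl_subset_def interval_fun_def)
    have "h x \<le> Il \<Omega> (\<lambda>y. fst (g y)) x" using Ih[OF x] Il_mono[of \<Omega> h "\<lambda>y. fst (g y)" x] lo by simp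
    moreover have "Il \<Omega> (\<lambda>y. fst (g y)) x \<le> Il \<Omega> (Su \<Omega> h) x"
      by (rule Il_mono) (meson gg hi order_trans)
    moreover have "Su \<Omega> (\<lambda>y. snd (g y)) x \<le> Su \<Omega> (Su \<Omega> h) x" by (rule Su_mono) (simp add: hi)
    moreover have "Su \<Omega> h x \<le> Su \<Omega> (\<lambda>y. snd (g y)) x"
      by (rule Su_mono) (meson gg lo order_trans)
    ultimately show "Fop \<Omega> g x = (h x, Su \<Omega> h x)"
      using h[OF x] Su_idem[OF x, of h]
      by (auto simp: Fop_def lowerB_eq[OF gi] upperB_eq[OF gi] intro: antisym)
  qed
qed

lemma H_cont_of2:
  assumes h: "\<And>x. x \<in> \<Omega> \<Longrightarrow> Su \<Omega> (Il \<Omega> h) x = h x"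
  shows "interval_fun \<Omega> (\<lambda>x. (Il \<Omega> h x, h x))" "H_continuous \<Omega> (\<lambda>x. (Il \<Omega> h x, h x))"
proof -
  show "interval_fun \<Omega> (\<lambda>x. (Il \<Omega> h x, h x))" by (auto simp: interval_fun_def Il_le)
  have Sh: "Su \<Omega> h x = h x" if "x \<in> \<Omega>" for x
  proof -
    have "Su \<Omega> h x = Su \<Omega> (Su \<Omega> (Il \<Omega> h)) x" by (rule Su_cong) (simp add: h)
    also have "\<dots> = h x" using that by (simp add: Su_idem h)
    finally show ?thesis .
  qed
  show "H_continuous \<Omega> (\<lambda>x. (Il \<Omega> h x, h x))" unfolding H_continuous_def
  proof (intro allI impI ballI)
    fix g x assume g: "interval_fun \<Omega> g \<and> (\<forall>x\<in>\<Omega>. ivl_subset (g x) (Il \<Omega> h x, h x))"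
      and x: "x \<in> \<Omega>"
    hence gi: "interval_fun \<Omega> g" and lo: "\<And>y. y \<in> \<Omega> \<Longrightarrow> Il \<Omega> h y \<le> fst (g y)"
      and hi: "\<And>y. y \<in> \<Omega> \<Longrightarrow> snd (g y) \<le> h y"
      and gg: "\<And>y. y \<in> \<Omega> \<Longrightarrow> fst (g y) \<le> snd (g y)"
      by (auto simp: ivl_subset_def interval_fun_def)
    have "Su \<Omega> (\<lambda>y. snd (g y)) x \<le> h x" using Sh[OF x] Su_mono[of \<Omega> "\<lambda>y. snd (g y)" h x] hi by simp
    moreover have "Su \<Omega> (Il \<Omega> h) x \<le> Su \<Omega> (\<lambda>y. snd (g y)) x"
      by (rule Su_mono) (meson gg lo order_trans)
    moreover have "Il \<Omega> (Il \<Omega> h) x \<le> Il \<Omega> (\<lambda>y. fst (g y)) x" by (rule Il_mono) (simp add: lo)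
    moreover have "Il \<Omega> (\<lambda>y. fst (g y)) x \<le> Il \<Omega> h x"
      by (rule Il_mono) (meson gg hi order_trans)
    ultimately show "Fop \<Omega> g x = (Il \<Omega> h x, h x)"
      using h[OF x] Il_idem[OF x, of h]
      by (auto simp: Fop_def lowerB_eq[OF gi] upperB_eq[OF gi] intro: antisym)
  qed
qed

lemma fin_between:
  fixes a z c :: ereal
  shows "\<bar>a\<bar> \<noteq> \<infinity> \<Longrightarrow> \<bar>c\<bar> \<noteq> \<infinity> \<Longrightarrow> a \<le> z \<Longrightarrow> z \<le> c \<Longrightarrow> \<bar>z\<bar> \<noteq> \<infinity>"
  by (cases a; cases z; cases c) auto

lemma dense_Int:
  assumes "open D1" "D1 \<subseteq> \<Omega>" "\<Omega> \<subseteq> closure D1" "open D2" "D2 \<subseteq> \<Omega>" "\<Omega> \<subseteq> closure D2"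
  shows "open (D1 \<inter> D2) \<and> D1 \<inter> D2 \<subseteq> \<Omega> \<and> \<Omega> \<subseteq> closure (D1 \<inter> D2)"
proof -
  have "D1 \<subseteq> closure (D1 \<inter> D2)"
    using open_Int_closure_subset[OF assms(1), of D2] assms by blast
  hence "closure D1 \<subseteq> closure (D1 \<inter> D2)" by (simp add: closure_minimal)
  with assms show ?thesis by auto
qed

lemma nf_between:
  assumes "nearly_finite \<Omega> a" "nearly_finite \<Omega> c"
    and "\<And>x. x \<in> \<Omega> \<Longrightarrow> fst (a x) \<le> fst (u x) \<and> fst (u x) \<le> fst (c x)"
    and "\<And>x. x \<in> \<Omega> \<Longrightarrow> snd (a x) \<le> snd (u x) \<and> snd (u x) \<le> snd (c x)"
  shows "nearly_finite \<Omega> u"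
proof -
  obtain D1 where D1: "open D1" "D1 \<subseteq> \<Omega>" "\<Omega> \<subseteq> closure D1"
     "\<forall>x\<in>D1. \<bar>fst (a x)\<bar> \<noteq> \<infinity> \<and> \<bar>snd (a x)\<bar> \<noteq> \<infinity>"
    using assms(1) unfolding nearly_finite_def by blast
  obtain D2 where D2: "open D2" "D2 \<subseteq> \<Omega>" "\<Omega> \<subseteq> closure D2"
     "\<forall>x\<in>D2. \<bar>fst (c x)\<bar> \<noteq> \<infinity> \<and> \<bar>snd (c x)\<bar> \<noteq> \<infinity>"
    using assms(2) unfolding nearly_finite_def by blast
  have "\<forall>x\<in>D1 \<inter> D2. \<bar>fst (u x)\<bar> \<noteq> \<infinity> \<and> \<bar>snd (u x)\<bar> \<noteq> \<infinity>"
    using D1 D2 assms(3,4) fin_between by (metis IntD1 IntD2 subsetD)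
  with dense_Int[OF D1(1-3) D2(1-3)] show ?thesis unfolding nearly_finite_def by blast
qed


lemma sup_part:
  assumes FH: "\<F> \<subseteq> Hnf \<Omega>" and Fne: "\<F> \<noteq> {}" and b: "b \<in> Hnf \<Omega>" and bb: "\<forall>f\<in>\<F>. fun_le \<Omega> f b"
  shows "\<exists>u\<in>Hnf \<Omega>. is_sup_in \<Omega> (Hnf \<Omega>) \<F> u"
proof -
  define \<phi> where "\<phi> x = (SUP f\<in>\<F>. fst (f x))" for x
  define h where "h = Il \<Omega> (Su \<Omega> \<phi>)"
  define u where "u = (\<lambda>x. (h x, Su \<Omega> h x))"
  have hh: "Il \<Omega> (Su \<Omega> h) x = h x" for x unfolding h_def by (rule ISIS)
  have ui: "interval_fun \<Omega> u" and uh: "H_continuous \<Omega> u"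
    using H_cont_of1[of \<Omega> h] hh unfolding u_def by auto
  have Hf: "interval_fun \<Omega> f" "H_continuous \<Omega> f" "nearly_finite \<Omega> f" if "f \<in> Hnf \<Omega>" for f
    using that by (auto simp: Hnf_def)
  have ub: "fun_le \<Omega> f u" if f: "f \<in> \<F>" for f
    unfolding fun_le_def ivl_le_def
  proof
    fix x assume x: "x \<in> \<Omega>"
    have fH: "f \<in> Hnf \<Omega>" using f FH by auto
    note fa = Hc_facts[OF Hf(1,2)[OF fH]]
    have l: "fst (f y) \<le> \<phi> y" for y unfolding \<phi>_def using f by (rule SUP_upper)
    have sf: "snd (f y) \<le> Su \<Omega> \<phi> y" if y: "y \<in> \<Omega>" for y
    proof -
      have "snd (f y) = Su \<Omega> (\<lambda>y. fst (f y)) y" using fa(2)[OF y] by simp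
      also have "\<dots> \<le> Su \<Omega> \<phi> y" by (rule Su_mono) (rule l)
      finally show ?thesis .
    qed
    have "fst (f x) = Il \<Omega> (\<lambda>y. snd (f y)) x" using fa(3)[OF x] by simp
    also have "\<dots> \<le> h x" unfolding h_def
      by (rule Il_mono) (rule sf)
    finally have 1: "fst (f x) \<le> h x" .
    have 2: "fst (f y) \<le> h y" if "y \<in> \<Omega>" for y
    proof -
      have "fst (f y) = Il \<Omega> (\<lambda>y. snd (f y)) y" using fa(3)[OF that] by simp
      also have "\<dots> \<le> h y" unfolding h_def
        by (rule Il_mono) (rule sf)
      finally show ?thesis .
    qed
    have "snd (f x) = Su \<Omega> (\<lambda>y. fst (f y)) x" using fa(2)[OF x] by simp
    also have "\<dots> \<le> Su \<Omega> h x" by (rule Su_mono) (rule 2)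
    finally show "fst (f x) \<le> fst (u x) \<and> snd (f x) \<le> snd (u x)" using 1 by (simp add: u_def)
  qed
  have least: "fun_le \<Omega> u w" if wH: "w \<in> Hnf \<Omega>" and w: "\<forall>f\<in>\<F>. fun_le \<Omega> f w" for w
    unfolding fun_le_def ivl_le_def
  proof
    fix x assume x: "x \<in> \<Omega>"
    note wa = Hc_facts[OF Hf(1,2)[OF wH]]
    have wi: "fst (w y) \<le> snd (w y)" if "y \<in> \<Omega>" for y using Hf(1)[OF wH] that by (auto simp: interval_fun_def)
    have pw: "\<phi> y \<le> fst (w y)" if "y \<in> \<Omega>" for y
      unfolding \<phi>_def using w that by (intro SUP_least) (auto simp: fun_le_def ivl_le_def)
    have hw: "h y \<le> fst (w y)" if y: "y \<in> \<Omega>" for y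
    proof -
      have "h y \<le> Il \<Omega> (Su \<Omega> (\<lambda>y. snd (w y))) y" unfolding h_def
        by (intro Il_mono Su_mono) (meson pw wi order_trans)
      also have "\<dots> = Il \<Omega> (\<lambda>y. snd (w y)) y" by (intro Il_cong wa(4))
      also have "\<dots> = fst (w y)" using wa(3)[OF y] .
      finally show ?thesis .
    qed
    have "Su \<Omega> h x \<le> Su \<Omega> (\<lambda>y. fst (w y)) x" by (rule Su_mono) (rule hw)
    also have "\<dots> = snd (w x)" using wa(2)[OF x] .
    finally show "fst (u x) \<le> fst (w x) \<and> snd (u x) \<le> snd (w x)" using hw[OF x] by (simp add: u_def)
  qed
  obtain f0 where f0: "f0 \<in> \<F>" using Fne by blast
  have f0H: "f0 \<in> Hnf \<Omega>" using f0 FH by auto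
  have nf: "nearly_finite \<Omega> u"
    apply (rule nf_between[OF Hf(3)[OF f0H] Hf(3)[OF b]])
    using ub[OF f0] least[OF b bb] by (auto simp: fun_le_def ivl_le_def)
  have "u \<in> Hnf \<Omega>" using ui uh nf by (simp add: Hnf_def)
  moreover have "is_sup_in \<Omega> (Hnf \<Omega>) \<F> u"
    unfolding is_sup_in_def using \<open>u \<in> Hnf \<Omega>\<close> ub least by blast
  ultimately show ?thesis by blast
qed


lemma inf_part:
  assumes FH: "\<F> \<subseteq> Hnf \<Omega>" and Fne: "\<F> \<noteq> {}" and b: "b \<in> Hnf \<Omega>" and bb: "\<forall>f\<in>\<F>. fun_le \<Omega> b f"
  shows "\<exists>v\<in>Hnf \<Omega>. is_inf_in \<Omega> (Hnf \<Omega>) \<F> v"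
proof -
  define \<phi> where "\<phi> x = (INF f\<in>\<F>. snd (f x))" for x
  define h where "h = Su \<Omega> (Il \<Omega> \<phi>)"
  define v where "v = (\<lambda>x. (Il \<Omega> h x, h x))"
  have hh: "Su \<Omega> (Il \<Omega> h) x = h x" for x unfolding h_def by (rule SISI)
  have vi: "interval_fun \<Omega> v" and vh: "H_continuous \<Omega> v"
    using H_cont_of2[of \<Omega> h] hh unfolding v_def by auto
  have Hf: "interval_fun \<Omega> f" "H_continuous \<Omega> f" "nearly_finite \<Omega> f" if "f \<in> Hnf \<Omega>" for f
    using that by (auto simp: Hnf_def)
  have lb: "fun_le \<Omega> v f" if f: "f \<in> \<F>" for f
    unfolding fun_le_def ivl_le_def
  proof
    fix x assume x: "x \<in> \<Omega>"
    have fH: "f \<in> Hnf \<Omega>" using f FH by auto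
    note fa = Hc_facts[OF Hf(1,2)[OF fH]]
    have l: "\<phi> y \<le> snd (f y)" for y unfolding \<phi>_def using f by (rule INF_lower)
    have sf: "Il \<Omega> \<phi> y \<le> fst (f y)" if y: "y \<in> \<Omega>" for y
    proof -
      have "Il \<Omega> \<phi> y \<le> Il \<Omega> (\<lambda>y. snd (f y)) y" by (rule Il_mono) (rule l)
      also have "\<dots> = fst (f y)" using fa(3)[OF y] by simp
      finally show ?thesis .
    qed
    have 2: "h y \<le> snd (f y)" if y: "y \<in> \<Omega>" for y
    proof -
      have "h y \<le> Su \<Omega> (\<lambda>y. fst (f y)) y" unfolding h_def
        by (rule Su_mono) (rule sf)
      also have "\<dots> = snd (f y)" using fa(2)[OF y] by simp
      finally show ?thesis .
    qed
    have "Il \<Omega> h x \<le> Il \<Omega> (\<lambda>y. snd (f y)) x" by (rule Il_mono) (rule 2)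
    also have "\<dots> = fst (f x)" using fa(3)[OF x] by simp
    finally show "fst (v x) \<le> fst (f x) \<and> snd (v x) \<le> snd (f x)" using 2[OF x] by (simp add: v_def)
  qed
  have greatest: "fun_le \<Omega> w v" if wH: "w \<in> Hnf \<Omega>" and w: "\<forall>f\<in>\<F>. fun_le \<Omega> w f" for w
    unfolding fun_le_def ivl_le_def
  proof
    fix x assume x: "x \<in> \<Omega>"
    note wa = Hc_facts[OF Hf(1,2)[OF wH]]
    have pw: "snd (w y) \<le> \<phi> y" if "y \<in> \<Omega>" for y
      unfolding \<phi>_def using w that by (intro INF_greatest) (auto simp: fun_le_def ivl_le_def)
    have hw: "snd (w y) \<le> h y" if y: "y \<in> \<Omega>" for y
    proof -
      have "snd (w y) = Su \<Omega> (\<lambda>y. fst (w y)) y" using wa(2)[OF y] by simp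
      also have "\<dots> = Su \<Omega> (Il \<Omega> (\<lambda>y. snd (w y))) y" by (intro Su_cong) (simp add: wa(3))
      also have "\<dots> \<le> h y" unfolding h_def
        by (intro Il_mono Su_mono) (rule pw)
      finally show ?thesis .
    qed
    have "fst (w x) = Il \<Omega> (\<lambda>y. snd (w y)) x" using wa(3)[OF x] by simp
    also have "\<dots> \<le> Il \<Omega> h x" by (rule Il_mono) (rule hw)
    finally show "fst (w x) \<le> fst (v x) \<and> snd (w x) \<le> snd (v x)" using hw[OF x] by (simp add: v_def)
  qed
  obtain f0 where f0: "f0 \<in> \<F>" using Fne by blast
  have f0H: "f0 \<in> Hnf \<Omega>" using f0 FH by auto
  have nf: "nearly_finite \<Omega> v"
    apply (rule nf_between[OF Hf(3)[OF b] Hf(3)[OF f0H]])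
    using lb[OF f0] greatest[OF b bb] by (auto simp: fun_le_def ivl_le_def)
  have "v \<in> Hnf \<Omega>" using vi vh nf by (simp add: Hnf_def)
  moreover have "is_inf_in \<Omega> (Hnf \<Omega>) \<F> v"
    unfolding is_inf_in_def using \<open>v \<in> Hnf \<Omega>\<close> lb greatest by blast
  ultimately show ?thesis by blast
qed

theorem theorem24:
  fixes \<Omega> :: "'a::euclidean_space set"
  assumes "open \<Omega>"
  shows "(\<forall>\<F>. \<F> \<subseteq> Hnf \<Omega> \<and> \<F> \<noteq> {} \<and> (\<exists>b\<in>Hnf \<Omega>. \<forall>f\<in>\<F>. fun_le \<Omega> f b)
            \<longrightarrow> (\<exists>u\<in>Hnf \<Omega>. is_sup_in \<Omega> (Hnf \<Omega>) \<F> u))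
       \<and> (\<forall>\<F>. \<F> \<subseteq> Hnf \<Omega> \<and> \<F> \<noteq> {} \<and> (\<exists>b\<in>Hnf \<Omega>. \<forall>f\<in>\<F>. fun_le \<Omega> b f)
            \<longrightarrow> (\<exists>v\<in>Hnf \<Omega>. is_inf_in \<Omega> (Hnf \<Omega>) \<F> v))"
  using sup_part inf_part by blast

end
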